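(* Let $\mathfrak g$ be a complex non-model filiform Lie algebra of dimension $n$, with invariant $z_2=z_2(\mathfrak g)$, and put $z_2^*=n+1-z_2$. Then: (i) for all integers $k,\ell,k',\ell'\ge 1$ with $k\le k'$ and $\ell\le \ell'$ one has $\dim[C^{k'}\mathfrak g,C^{\ell'}\mathfrak g]\le \dim[C^k\mathfrak g,C^\ell\mathfrak g]$; (ii) $[C^{z_2^*}\mathfrak g,C^{z_2^*}\mathfrak g]=\{0\}$; (iii) for every $k\ge 2$, $[C^k\mathfrak g,C^k\mathfrak g]=[C^k\mathfrak g,C^{k+1}\mathfrak g]$; consequently $\mathrm{hp}_{\mathfrak g,k,k}=\mathrm{hp}_{\mathfrak g,k+1,k}=\mathrm{hp}_{\mathfrak g,k,k+1}$ for all $k\ge 2$.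
   Context: All Lie algebras are over $\mathbb C$. The lower central series of a Lie algebra $\mathfrak g$ is $C^1\mathfrak g=\mathfrak g$, $C^k\mathfrak g=[C^{k-1}\mathfrak g,\mathfrak g]$ for $k\ge2$. A Lie algebra $\mathfrak g$ is filiform if $\dim\mathfrak g=n\ge 2$ and $\dim C^k\mathfrak g=n-k$ for $2\le k\le n$. The model filiform Lie algebra of dimension $n$ has a basis $e_1,\dots,e_n$ with $[e_1,e_h]=e_{h-1}$ for $3\le h\le n$ and all other brackets of basis vectors zero; "non-model" means not isomorphic to it (so $n\ge5$). An adapted basis of a filiform $\mathfrak g$ is a basis $\{e_1,\dots,e_n\}$ with $[e_1,e_h]=e_{h-1}$ ($3\le h\le n$), $[e_2,e_h]=0$ ($1\le h\le n$), $[e_3,e_h]=0$ ($2\le h\le n$); every filiform Lie algebra has one, and then $C^k\mathfrak g=\langle e_2,\dots,e_{n-k+1}\rangle$ for $2\le k\le n-1$. The invariant $z_2(\mathfrak g)=\max\{k\in\mathbb N: C^{n-k+1}\mathfrak g \text{ is abelian}\}$; equivalently, for any adapted basis, $z_2=\min\{k\ge4:[e_k,e_{k+1}]\ne0\}$. The Hilbert polynomial of $\mathfrak g$ is $\mathrm{HP}_{\mathfrak g}(t,s)=\sum_{k,\ell\ge1}\dim[C^k\mathfrak g,C^\ell\mathfrak g]\,t^ks^\ell\in\mathbb Z[t,s]$, and $\mathrm{hp}_{\mathfrak g,k,\ell}:=\dim[C^k\mathfrak g,C^\ell\mathfrak g]$ denotes the coefficient of $t^ks^\ell$. *)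

theory Defs
  imports Complex_Main
begin

text \<open>A complex Lie algebra is represented by its underlying additive group (the whole
type 'a), a complex scalar multiplication sc and a bracket br.\<close>

definition lie_algebra :: "(complex \<Rightarrow> 'a::ab_group_add \<Rightarrow> 'a) \<Rightarrow> ('a \<Rightarrow> 'a \<Rightarrow> 'a) \<Rightarrow> bool" where
  "lie_algebra sc br \<longleftrightarrow>
     vector_space sc \<and>
     (\<forall>a b x y z. br (sc a x + sc b y) z = sc a (br x z) + sc b (br y z)) \<and>
     (\<forall>a b x y z. br z (sc a x + sc b y) = sc a (br z x) + sc b (br z y)) \<and>
     (\<forall>x. br x x = 0) \<and>
     (\<forall>x y z. br x (br y z) + br y (br z x) + br z (br x y) = 0)"

definition fin_dim :: "(complex \<Rightarrow> 'a::ab_group_add \<Rightarrow> 'a) \<Rightarrow> bool" where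
  "fin_dim sc \<longleftrightarrow> (\<exists>B. finite B \<and> module.span sc B = UNIV)"

definition lie_brk :: "(complex \<Rightarrow> 'a::ab_group_add \<Rightarrow> 'a) \<Rightarrow> ('a \<Rightarrow> 'a \<Rightarrow> 'a) \<Rightarrow> 'a set \<Rightarrow> 'a set \<Rightarrow> 'a set" where
  "lie_brk sc br A B = module.span sc {br x y | x y. x \<in> A \<and> y \<in> B}"

text \<open>lcs0 m = C^(m+1).\<close>
primrec lcs0 :: "(complex \<Rightarrow> 'a::ab_group_add \<Rightarrow> 'a) \<Rightarrow> ('a \<Rightarrow> 'a \<Rightarrow> 'a) \<Rightarrow> nat \<Rightarrow> 'a set" where
  "lcs0 sc br 0 = UNIV"
| "lcs0 sc br (Suc m) = lie_brk sc br (lcs0 sc br m) UNIV"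

definition lcs :: "(complex \<Rightarrow> 'a::ab_group_add \<Rightarrow> 'a) \<Rightarrow> ('a \<Rightarrow> 'a \<Rightarrow> 'a) \<Rightarrow> nat \<Rightarrow> 'a set" where
  "lcs sc br k = lcs0 sc br (k - 1)"

definition lie_dim :: "(complex \<Rightarrow> 'a::ab_group_add \<Rightarrow> 'a) \<Rightarrow> nat" where
  "lie_dim sc = vector_space.dim sc (UNIV :: 'a set)"

definition filiform :: "(complex \<Rightarrow> 'a::ab_group_add \<Rightarrow> 'a) \<Rightarrow> ('a \<Rightarrow> 'a \<Rightarrow> 'a) \<Rightarrow> bool" where
  "filiform sc br \<longleftrightarrow> lie_algebra sc br \<and> fin_dim sc \<and> lie_dim sc \<ge> 2 \<and>
     (\<forall>k. 2 \<le> k \<and> k \<le> lie_dim sc \<longrightarrow> vector_space.dim sc (lcs sc br k) = lie_dim sc - k)"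

text \<open>g is isomorphic to the model filiform algebra of dimension n iff it has a basis
e_1,...,e_n whose brackets are those of the model algebra.\<close>
definition is_model :: "(complex \<Rightarrow> 'a::ab_group_add \<Rightarrow> 'a) \<Rightarrow> ('a \<Rightarrow> 'a \<Rightarrow> 'a) \<Rightarrow> bool" where
  "is_model sc br \<longleftrightarrow> (\<exists>e :: nat \<Rightarrow> 'a.
     inj_on e {1..lie_dim sc} \<and>
     \<not> module.dependent sc (e ` {1..lie_dim sc}) \<and>
     module.span sc (e ` {1..lie_dim sc}) = UNIV \<and>
     (\<forall>i\<in>{1..lie_dim sc}. \<forall>j\<in>{1..lie_dim sc}.
        br (e i) (e j) = (if i = 1 \<and> 3 \<le> j then e (j - 1)
                          else if j = 1 \<and> 3 \<le> i then - e (i - 1) else 0)))"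

definition abelian_sub :: "('a \<Rightarrow> 'a \<Rightarrow> 'a::ab_group_add) \<Rightarrow> 'a set \<Rightarrow> bool" where
  "abelian_sub br A \<longleftrightarrow> (\<forall>x\<in>A. \<forall>y\<in>A. br x y = 0)"

definition z2 :: "(complex \<Rightarrow> 'a::ab_group_add \<Rightarrow> 'a) \<Rightarrow> ('a \<Rightarrow> 'a \<Rightarrow> 'a) \<Rightarrow> nat" where
  "z2 sc br = (GREATEST k. abelian_sub br (lcs sc br (lie_dim sc - k + 1)))"

definition hp :: "(complex \<Rightarrow> 'a::ab_group_add \<Rightarrow> 'a) \<Rightarrow> ('a \<Rightarrow> 'a \<Rightarrow> 'a) \<Rightarrow> nat \<Rightarrow> nat \<Rightarrow> nat" where
  "hp sc br k l = vector_space.dim sc (lie_brk sc br (lcs sc br k) (lcs sc br l))"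

end

theory Submission
  imports Defs
begin

locale lie_fd = finite_dimensional_vector_space sc Bas
  for sc :: "complex \<Rightarrow> 'a::ab_group_add \<Rightarrow> 'a" and Bas +
  fixes br :: "'a \<Rightarrow> 'a \<Rightarrow> 'a"
  assumes Lb: "\<And>a b x y z. br (sc a x + sc b y) z = sc a (br x z) + sc b (br y z)"
  and Rb: "\<And>a b x y z. br z (sc a x + sc b y) = sc a (br z x) + sc b (br z y)"
  and Ab: "\<And>x. br x x = 0"
begin

lemma addL: "br (x + y) z = br x z + br y z"
  using Lb[of "1::complex" x 1 y z] by simp
lemma addR: "br z (x + y) = br z x + br z y"
  using Rb[where a=1 and b=1 and x=x and y=y and z=z] by simp
lemma scL: "br (sc c x) z = sc c (br x z)"
  using Lb[of c x "0::complex" y z] by simp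
lemma scR: "br z (sc c x) = sc c (br z x)"
  using Rb[where a=c and b=0 and x=x and y=x and z=z] by simp
lemma zeroL: "br 0 z = 0"
  using scL[of "0::complex" x z] by simp
lemma anti: "br x y = - br y x"
proof -
  have "br (x+y) (x+y) = 0" by (rule Ab)
  moreover have "br (x+y) (x+y) = br x x + br x y + (br y x + br y y)"
    by (simp add: addL addR add.assoc)
  ultimately have "br x y + br y x = 0" by (simp add: Ab)
  thus ?thesis by (simp add: eq_neg_iff_add_eq_0)
qed

lemma brk_mono: "A \<subseteq> A' \<Longrightarrow> C \<subseteq> C' \<Longrightarrow> lie_brk sc br A C \<subseteq> lie_brk sc br A' C'"
  unfolding lie_brk_def by (rule span_mono) blast

lemma brk_sub: "subspace (lie_brk sc br A C)"
  unfolding lie_brk_def by simp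

lemma lcs0_sub: "subspace (lcs0 sc br m)"
  by (cases m) (auto simp: lie_brk_def subspace_UNIV)

lemma lcs_sub: "subspace (lcs sc br m)"
  unfolding lcs_def by (rule lcs0_sub)

lemma lcs0_Suc_le: "lcs0 sc br (Suc m) \<subseteq> lcs0 sc br m"
proof (induction m)
  case 0 then show ?case by simp
next
  case (Suc m)
  show ?case using brk_mono[OF Suc.IH subset_refl] by simp
qed

lemma lcs0_add_le: "lcs0 sc br (m + d) \<subseteq> lcs0 sc br m"
proof (induction d)
  case 0 show ?case by simp
next
  case (Suc d)
  have "lcs0 sc br (m + Suc d) \<subseteq> lcs0 sc br (m + d)"
    using lcs0_Suc_le[of "m+d"] by (simp only: add_Suc_right)
  thus ?case using Suc.IH by (rule order_trans)
qed

lemma lcs_mono: "k \<le> k' \<Longrightarrow> lcs sc br k' \<subseteq> lcs sc br k"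
proof (cases "k = 0")
  case True thus ?thesis by (simp add: lcs_def)
next
  case False
  assume "k \<le> k'"
  hence eq: "k' - 1 = (k - 1) + (k' - k)" using False by simp
  show ?thesis unfolding lcs_def eq by (rule lcs0_add_le)
qed

lemma brk_zero: "abelian_sub br A \<Longrightarrow> lie_brk sc br A A = {0}"
proof -
  assume "abelian_sub br A"
  hence "{br x y | x y. x \<in> A \<and> y \<in> A} \<subseteq> {0}" by (auto simp: abelian_sub_def)
  hence "lie_brk sc br A A \<subseteq> {0}" unfolding lie_brk_def
    by (rule span_minimal) (rule subspace_single_0)
  moreover have "0 \<in> lie_brk sc br A A" unfolding lie_brk_def by (rule span_zero)
  ultimately show ?thesis by blast
qed

lemma brk_swap1: "lie_brk sc br A C \<subseteq> lie_brk sc br C A"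
  unfolding lie_brk_def
proof (rule span_minimal[OF _ subspace_span])
  show "{br x y |x y. x \<in> A \<and> y \<in> C} \<subseteq> span {br x y |x y. x \<in> C \<and> y \<in> A}"
  proof
    fix z assume "z \<in> {br x y |x y. x \<in> A \<and> y \<in> C}"
    then obtain x y where z: "z = br x y" and xy: "x \<in> A" "y \<in> C" by blast
    have "br y x \<in> {br x y |x y. x \<in> C \<and> y \<in> A}" using xy by blast
    hence "br y x \<in> span {br x y |x y. x \<in> C \<and> y \<in> A}" by (rule span_base)
    hence "- br y x \<in> span {br x y |x y. x \<in> C \<and> y \<in> A}" by (rule span_neg)
    thus "z \<in> span {br x y |x y. x \<in> C \<and> y \<in> A}" unfolding z anti[of x y] .
  qed
qed

lemma brk_swap: "lie_brk sc br A C = lie_brk sc br C A"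
  using brk_swap1[of A C] brk_swap1[of C A] by (rule subset_antisym)

lemma codim1:
  assumes "L \<subseteq> V" "subspace L" "subspace V" "dim V = dim L + 1"
  obtains x where "x \<in> V" "\<forall>v\<in>V. \<exists>a c. a \<in> L \<and> v = a + sc c x"
proof -
  have "L \<noteq> V" using assms(4) by auto
  then obtain x where x: "x \<in> V" "x \<notin> L" using assms(1) by blast
  have sL: "span L = L" using assms(2) by simp
  have sV: "span V = V" using assms(3) by simp
  have sub: "insert x L \<subseteq> V" using x assms(1) by blast
  have xs: "x \<notin> span L" by (subst sL) (rule x(2))
  have "dim (insert x L) = dim L + 1" using xs dim_insert[of x L] by simp
  hence "span (insert x L) = span V" using dim_eq_span[OF sub] assms(4) by simp
  hence eq: "span (insert x L) = V" using sV by simp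
  have "\<forall>v\<in>V. \<exists>a c. a \<in> L \<and> v = a + sc c x"
  proof
    fix v assume "v \<in> V"
    hence "v \<in> span (insert x L)" using eq by simp
    then obtain c where "v - sc c x \<in> span L" unfolding span_insert by blast
    hence "v - sc c x \<in> L" using sL by simp
    thus "\<exists>a c. a \<in> L \<and> v = a + sc c x" by (intro exI[of _ "v - sc c x"] exI[of _ c]) simp
  qed
  with x show ?thesis using that by blast
qed

lemma brk_codim:
  assumes "L \<subseteq> V" "x \<in> V" "\<forall>v\<in>V. \<exists>a c. a \<in> L \<and> v = a + sc c x"
  shows "lie_brk sc br V V = lie_brk sc br V L"
proof
  show "lie_brk sc br V L \<subseteq> lie_brk sc br V V" by (rule brk_mono[OF subset_refl assms(1)])
  show "lie_brk sc br V V \<subseteq> lie_brk sc br V L"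
    unfolding lie_brk_def
  proof (rule span_minimal[OF _ subspace_span], clarify)
    let ?S = "{br x y |x y. x \<in> V \<and> y \<in> L}"
    fix v w assume vV: "v \<in> V" and wV: "w \<in> V"
    from assms(3) vV obtain a c where aL: "a \<in> L" and va: "v = a + sc c x" by blast
    from assms(3) wV obtain b d where bL: "b \<in> L" and wb: "w = b + sc d x" by blast
    have aV: "a \<in> V" using aL assms(1) by blast
    have "br a b \<in> ?S" using aV bL by blast
    hence 1: "br a b \<in> span ?S" by (rule span_base)
    have "br x a \<in> ?S" using assms(2) aL by blast
    hence "br x a \<in> span ?S" by (rule span_base)
    hence "- br x a \<in> span ?S" by (rule span_neg)
    hence 2: "br a x \<in> span ?S" by (simp only: anti[of a x])
    have "br x b \<in> ?S" using assms(2) bL by blast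
    hence 3: "br x b \<in> span ?S" by (rule span_base)
    have "br v w = br a (b + sc d x) + sc c (br x (b + sc d x))"
      unfolding va wb by (simp only: addL scL)
    also have "\<dots> = br a b + sc d (br a x) + sc c (br x b)"
      by (simp only: addR scR Ab) simp
    also have "\<dots> \<in> span ?S" using 1 2 3 by (intro span_add span_scale)
    finally show "br v w \<in> span ?S" .
  qed
qed

lemma lcs_big_zero:
  assumes n: "n = dim (UNIV::'a set)" "2 \<le> n"
    and dims: "\<forall>k. 2 \<le> k \<and> k \<le> n \<longrightarrow> dim (lcs sc br k) = n - k"
    and k: "n \<le> k"
  shows "lcs sc br k = {0}"
proof -
  have "dim (lcs sc br n) = 0" using dims n by simp
  hence z: "lcs sc br n \<subseteq> {0}" by simp
  have "lcs sc br k \<subseteq> {0}" using z lcs_mono[of n k] k by auto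
  thus ?thesis using subspace_0[OF lcs_sub] by blast
qed

lemma part3:
  assumes n: "n = dim (UNIV::'a set)" "2 \<le> n"
    and dims: "\<forall>k. 2 \<le> k \<and> k \<le> n \<longrightarrow> dim (lcs sc br k) = n - k"
    and k: "2 \<le> k"
  shows "lie_brk sc br (lcs sc br k) (lcs sc br k) = lie_brk sc br (lcs sc br k) (lcs sc br (k+1))"
proof (cases "k < n")
  case True
  have d1: "dim (lcs sc br k) = n - k" using dims k True by simp
  have d2: "dim (lcs sc br (k+1)) = n - (k+1)" using dims k True by simp
  have "dim (lcs sc br k) = dim (lcs sc br (k+1)) + 1" using d1 d2 True by simp
  moreover have sub: "lcs sc br (k+1) \<subseteq> lcs sc br k" by (rule lcs_mono) simp
  ultimately obtain x where "x \<in> lcs sc br k" "\<forall>v\<in>lcs sc br k. \<exists>a c. a \<in> lcs sc br (k+1) \<and> v = a + sc c x"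
    using codim1[OF sub lcs_sub lcs_sub] by blast
  thus ?thesis by (rule brk_codim[OF sub])
next
  case False
  have "n \<le> k" "n \<le> k+1" using False by simp_all
  hence "lcs sc br k = {0}" "lcs sc br (k+1) = {0}"
    using lcs_big_zero[OF n dims] by blast+
  thus ?thesis by (simp only:)
qed

lemma part2:
  assumes n: "n = dim (UNIV::'a set)" "2 \<le> n"
    and dims: "\<forall>k. 2 \<le> k \<and> k \<le> n \<longrightarrow> dim (lcs sc br k) = n - k"
  shows "lie_brk sc br (lcs sc br (n + 1 - z2 sc br)) (lcs sc br (n + 1 - z2 sc br)) = {0}"
proof -
  let ?P = "\<lambda>k. abelian_sub br (lcs sc br (lie_dim sc - k + 1))"
  have ld: "lie_dim sc = n" using n by (simp add: lie_dim_def)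
  have ab0: "abelian_sub br {0}" by (simp add: abelian_sub_def zeroL)
  have l01: "lcs sc br 0 = lcs sc br 1" by (simp add: lcs_def)
  have "abelian_sub br (lcs sc br (n + 1 - z2 sc br))"
  proof (cases "\<exists>b. \<forall>y. ?P y \<longrightarrow> y \<le> b")
    case True
    then obtain b where b: "\<And>y. ?P y \<Longrightarrow> y \<le> b" by blast
    have "?P 0" using lcs_big_zero[OF n dims, of "n+1"] ab0 ld by simp
    hence "?P (Greatest ?P)" using GreatestI_nat[of ?P 0 b] b by blast
    hence P: "?P (z2 sc br)" by (simp add: z2_def)
    show ?thesis
    proof (cases "z2 sc br \<le> n")
      case True
      hence "n - z2 sc br + 1 = n + 1 - z2 sc br" by simp
      thus ?thesis using P ld by simp
    next
      case False
      hence "n - z2 sc br + 1 = 1" "n + 1 - z2 sc br = 0" by simp_all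
      thus ?thesis using P ld l01 by simp
    qed
  next
    case False
    then obtain y where y: "?P y" "\<not> y \<le> n" by blast
    hence "lie_dim sc - y + 1 = 1" using ld by simp
    hence "abelian_sub br (lcs sc br 1)" using y by simp
    moreover have "lcs sc br (n + 1 - z2 sc br) \<subseteq> lcs sc br 1"
      using lcs_mono[of 1 "n + 1 - z2 sc br"] l01 by (cases "n + 1 - z2 sc br") auto
    ultimately show ?thesis unfolding abelian_sub_def by blast
  qed
  thus ?thesis by (rule brk_zero)
qed

lemma part1:
  assumes "k \<le> k'" "l \<le> l'"
  shows "hp sc br k' l' \<le> hp sc br k l"
  unfolding hp_def
  by (rule dim_subset[OF brk_mono[OF lcs_mono[OF assms(1)] lcs_mono[OF assms(2)]]])

end


theorem mainTheorem1:
  fixes sc :: "complex \<Rightarrow> 'a::ab_group_add \<Rightarrow> 'a" and br :: "'a \<Rightarrow> 'a \<Rightarrow> 'a"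
  assumes "filiform sc br" and "\<not> is_model sc br"
  shows "(\<forall>k l k' l'. 1 \<le> k \<and> 1 \<le> l \<and> k \<le> k' \<and> l \<le> l' \<longrightarrow> hp sc br k' l' \<le> hp sc br k l)
    \<and> lie_brk sc br (lcs sc br (lie_dim sc + 1 - z2 sc br)) (lcs sc br (lie_dim sc + 1 - z2 sc br)) = {0}
    \<and> (\<forall>k\<ge>2. lie_brk sc br (lcs sc br k) (lcs sc br k) = lie_brk sc br (lcs sc br k) (lcs sc br (k + 1))
             \<and> hp sc br k k = hp sc br (k + 1) k \<and> hp sc br k k = hp sc br k (k + 1))"
proof -
  have la: "lie_algebra sc br" and fd: "fin_dim sc" and n2: "lie_dim sc \<ge> 2"
    and dims: "\<forall>k. 2 \<le> k \<and> k \<le> lie_dim sc \<longrightarrow> vector_space.dim sc (lcs sc br k) = lie_dim sc - k"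
    using assms(1) unfolding filiform_def by blast+
  have vs: "vector_space sc" using la unfolding lie_algebra_def by blast
  interpret vs: vector_space sc by (rule vs)
  obtain B where B: "finite B" "vs.span B = UNIV" using fd unfolding fin_dim_def by blast
  obtain B' where B': "vs.independent B'" "UNIV \<subseteq> vs.span B'"
    using vs.basis_exists[of UNIV] by blast
  have fB': "finite B'" using vs.independent_span_bound[OF B(1) B'(1)] B(2) by simp
  have sB': "vs.span B' = UNIV" using B'(2) by blast
  interpret fdv: finite_dimensional_vector_space sc B'
    by unfold_locales (auto simp: fB' B'(1) sB')
  interpret L: lie_fd sc B' br
    apply unfold_locales
    using la unfolding lie_algebra_def by blast+
  define n where "n = lie_dim sc"
  have nd: "n = vector_space.dim sc (UNIV :: 'a set)" by (simp add: n_def lie_dim_def)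
  have n2': "2 \<le> n" using n2 n_def by simp
  have dims': "\<forall>k. 2 \<le> k \<and> k \<le> n \<longrightarrow> vector_space.dim sc (lcs sc br k) = n - k"
    using dims n_def by simp
  have P1: "\<forall>k l k' l'. 1 \<le> k \<and> 1 \<le> l \<and> k \<le> k' \<and> l \<le> l' \<longrightarrow> hp sc br k' l' \<le> hp sc br k l"
    using L.part1 by blast
  have P2: "lie_brk sc br (lcs sc br (lie_dim sc + 1 - z2 sc br)) (lcs sc br (lie_dim sc + 1 - z2 sc br)) = {0}"
    using L.part2[OF nd n2' dims'] n_def by simp
  have P3: "\<forall>k\<ge>2. lie_brk sc br (lcs sc br k) (lcs sc br k) = lie_brk sc br (lcs sc br k) (lcs sc br (k + 1))
             \<and> hp sc br k k = hp sc br (k + 1) k \<and> hp sc br k k = hp sc br k (k + 1)"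
  proof (intro allI impI)
    fix k :: nat assume k: "2 \<le> k"
    have e: "lie_brk sc br (lcs sc br k) (lcs sc br k) = lie_brk sc br (lcs sc br k) (lcs sc br (k + 1))"
      by (rule L.part3[OF nd n2' dims' k])
    have e2: "lie_brk sc br (lcs sc br (k+1)) (lcs sc br k) = lie_brk sc br (lcs sc br k) (lcs sc br (k + 1))"
      by (rule L.brk_swap)
    show "lie_brk sc br (lcs sc br k) (lcs sc br k) = lie_brk sc br (lcs sc br k) (lcs sc br (k + 1))
             \<and> hp sc br k k = hp sc br (k + 1) k \<and> hp sc br k k = hp sc br k (k + 1)"
      unfolding hp_def using e e2 by simp
  qed
  show ?thesis using P1 P2 P3 by blast
qed

end
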